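(* Greedy charger placement is not optimal in general. Consider the directed graph with vertices $O, c_0, c_1, c_2, c_3, c_4, c_5, D$ and links (with delay functions of the link's own flow $x$): $O\to c_0$: $10$; $c_0\to D$: $10$; $O\to c_4$: $x$; $c_4\to c_3$: $0$; $c_3\to D$: $1.1$; $c_4\to c_2$: $0$; $c_2\to c_5$: $0$; $c_5\to D$: $x$; $O\to c_1$: $0$; $c_1\to c_5$: $1.1$. There is a single OD pair $(O,D)$ with demand $1$, all of type $F_2$ (must charge exactly once), and charging self-loops have zero delay. A charger always exists at $c_0$; one must choose a set $S\subseteq\{c_1,c_2,c_3\}$ with $|S|=2$ of additional charger locations, the objective being the total delay $c_d=\sum_l x_l d_l(x_l)$ at Nash equilibrium of the network with chargers at $\{c_0\}\cup S$. Then: (i) with a single added charger, the equilibrium total delay is $2.1$ for $S=\{c_1\}$, $2$ for $S=\{c_2\}$, and $2.1$ for $S=\{c_3\}$; (ii) for $S=\{c_1,c_2\}$ and $S=\{c_2,c_3\}$ the equilibrium total delay is $2$; (iii) for $S=\{c_1,c_3\}$ the equilibrium total delay is $1.6$. Consequently the greedy algorithm (which adds one location at a time, each time the one minimizing the equilibrium total delay) selects $c_2$ first and ends with total delay $2$, whereas the optimal choice $\{c_1,c_3\}$ achieves $1.6$.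
   Context: Model: non-atomic congestion game on a directed graph; a charger at vertex $v$ is a self-loop $(v,v)$; an $F_2$ agent's feasible routes are directed paths (distinct vertices) from $O$ to $D$ containing exactly one charging self-loop at a vertex of the path where a charger is placed. Route cost is the sum of link delays evaluated at the link flows. A Nash (Wardrop) equilibrium is a feasible route-flow assignment in which every route carrying positive flow has minimal cost among feasible routes. Total delay is $c_d=\sum_{l} x_l\,d_l(x_l)$ summed over all links (including charger self-loops, which here contribute zero). *)

theory Defs
  imports Main "HOL.Real"
begin

datatype node = VO | C0 | C1 | C2 | C3 | C4 | C5 | VD

definition E :: "(node \<times> node) set" where
  "E = {(VO,C0),(C0,VD),(VO,C4),(C4,C3),(C3,VD),(C4,C2),(C2,C5),(C5,VD),(VO,C1),(C1,C5)}"

text \<open>Delay functions of the link's own flow; charging self-loops (and non-links) have zero delay.\<close>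
fun delay :: "node \<times> node \<Rightarrow> real \<Rightarrow> real" where
  "delay (VO,C0) x = 10"
| "delay (C0,VD) x = 10"
| "delay (VO,C4) x = x"
| "delay (C4,C3) x = 0"
| "delay (C3,VD) x = 1.1"
| "delay (C4,C2) x = 0"
| "delay (C2,C5) x = 0"
| "delay (C5,VD) x = x"
| "delay (VO,C1) x = 0"
| "delay (C1,C5) x = 1.1"
| "delay _ x = 0"

definition path_links :: "node list \<Rightarrow> (node \<times> node) set" where
  "path_links p = set (zip p (tl p))"

definition is_od_path :: "node list \<Rightarrow> bool" where
  "is_od_path p \<longleftrightarrow> p \<noteq> [] \<and> hd p = VO \<and> last p = VD \<and> distinct p \<and> path_links p \<subseteq> E"

text \<open>Feasible F2 routes given the charger set S: a path plus exactly one charging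
  self-loop at a vertex of the path carrying a charger.\<close>
definition feasible_routes :: "node set \<Rightarrow> (node list \<times> node) set" where
  "feasible_routes S = {(p, c). is_od_path p \<and> c \<in> set p \<and> c \<in> S}"

definition route_links :: "node list \<times> node \<Rightarrow> (node \<times> node) set" where
  "route_links r = path_links (fst r) \<union> {(snd r, snd r)}"

definition link_flow :: "node set \<Rightarrow> (node list \<times> node \<Rightarrow> real) \<Rightarrow> node \<times> node \<Rightarrow> real" where
  "link_flow S f l = (\<Sum>r\<in>feasible_routes S. if l \<in> route_links r then f r else 0)"

definition route_cost :: "node set \<Rightarrow> (node list \<times> node \<Rightarrow> real) \<Rightarrow> node list \<times> node \<Rightarrow> real" where
  "route_cost S f r = (\<Sum>l\<in>route_links r. delay l (link_flow S f l))"

definition is_assignment :: "node set \<Rightarrow> (node list \<times> node \<Rightarrow> real) \<Rightarrow> bool" where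
  "is_assignment S f \<longleftrightarrow> (\<forall>r. 0 \<le> f r) \<and> (\<forall>r. r \<notin> feasible_routes S \<longrightarrow> f r = 0)
     \<and> (\<Sum>r\<in>feasible_routes S. f r) = 1"

definition is_equilibrium :: "node set \<Rightarrow> (node list \<times> node \<Rightarrow> real) \<Rightarrow> bool" where
  "is_equilibrium S f \<longleftrightarrow> is_assignment S f \<and>
     (\<forall>r\<in>feasible_routes S. 0 < f r \<longrightarrow> (\<forall>r'\<in>feasible_routes S. route_cost S f r \<le> route_cost S f r'))"

definition network_links :: "node set \<Rightarrow> (node \<times> node) set" where
  "network_links S = E \<union> {(v, v) | v. v \<in> S}"

definition total_delay :: "node set \<Rightarrow> (node list \<times> node \<Rightarrow> real) \<Rightarrow> real" where
  "total_delay S f = (\<Sum>l\<in>network_links S. link_flow S f l * delay l (link_flow S f l))"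

definition eq_total_delay :: "node set \<Rightarrow> real \<Rightarrow> bool" where
  "eq_total_delay A v \<longleftrightarrow> (\<exists>f. is_equilibrium (insert C0 A) f) \<and>
     (\<forall>f. is_equilibrium (insert C0 A) f \<longrightarrow> total_delay (insert C0 A) f = v)"

end

theory Submission imports Defs begin

lemma pl_cons2: "path_links (v#w#q) = insert (v,w) (path_links (w#q))"
  by (simp add: path_links_def)
lemma pl_single: "path_links [v] = {}" by (simp add: path_links_def)

definition good :: "node list \<Rightarrow> node \<Rightarrow> bool" where
 "good q v \<longleftrightarrow> q \<noteq> [] \<and> hd q = v \<and> last q = VD \<and> path_links q \<subseteq> E"

lemma good_step: "good q v \<Longrightarrow> (v = VD \<and> q = [VD]) \<or> (\<exists>w q'. q = v # q' \<and> (v,w) \<in> E \<and> good q' w)"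
proof -
  assume g: "good q v"
  then obtain q' where q: "q = v # q'" unfolding good_def by (cases q) auto
  show ?thesis
  proof (cases q')
    case Nil then show ?thesis using g q by (simp add: good_def)
  next
    case (Cons w r)
    then show ?thesis using g q by (auto simp add: good_def pl_cons2)
  qed
qed

lemma noE_VD: "(VD,w) \<notin> E" by (simp add: E_def)

lemma gVD: "good q VD \<Longrightarrow> q = [VD]" using good_step noE_VD by blast
lemma gC5: "good q C5 \<Longrightarrow> q = [C5,VD]"
  apply (drule good_step) apply (auto simp: E_def dest: gVD) done
lemma gC3: "good q C3 \<Longrightarrow> q = [C3,VD]"
  apply (drule good_step) apply (auto simp: E_def dest: gVD) done
lemma gC0: "good q C0 \<Longrightarrow> q = [C0,VD]"
  apply (drule good_step) apply (auto simp: E_def dest: gVD) done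
lemma gC2: "good q C2 \<Longrightarrow> q = [C2,C5,VD]"
  apply (drule good_step) apply (auto simp: E_def dest: gC5) done
lemma gC1: "good q C1 \<Longrightarrow> q = [C1,C5,VD]"
  apply (drule good_step) apply (auto simp: E_def dest: gC5) done
lemma gC4: "good q C4 \<Longrightarrow> q = [C4,C3,VD] \<or> q = [C4,C2,C5,VD]"
  apply (drule good_step) apply (auto simp: E_def dest: gC2 gC3) done
lemma gVO: "good q VO \<Longrightarrow> q = [VO,C0,VD] \<or> q = [VO,C4,C3,VD] \<or> q = [VO,C4,C2,C5,VD] \<or> q = [VO,C1,C5,VD]"
  apply (drule good_step) apply (auto simp: E_def dest: gC4 gC0 gC1) done

lemma od0: "is_od_path [VO,C0,VD]" by (simp add: is_od_path_def path_links_def E_def)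
lemma od1: "is_od_path [VO,C4,C3,VD]" by (simp add: is_od_path_def path_links_def E_def)
lemma od2: "is_od_path [VO,C4,C2,C5,VD]" by (simp add: is_od_path_def path_links_def E_def)
lemma od3: "is_od_path [VO,C1,C5,VD]" by (simp add: is_od_path_def path_links_def E_def)

lemma od_char: "is_od_path p \<longleftrightarrow> p \<in> {[VO,C0,VD], [VO,C4,C3,VD], [VO,C4,C2,C5,VD], [VO,C1,C5,VD]}"
proof
  assume "is_od_path p" then have "good p VO" by (simp add: is_od_path_def good_def)
  then show "p \<in> {[VO,C0,VD], [VO,C4,C3,VD], [VO,C4,C2,C5,VD], [VO,C1,C5,VD]}" using gVO by simp
next
  assume "p \<in> {[VO,C0,VD], [VO,C4,C3,VD], [VO,C4,C2,C5,VD], [VO,C1,C5,VD]}"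
  then show "is_od_path p" using od0 od1 od2 od3 by blast
qed

lemma fr: "feasible_routes S = (Pair [VO,C0,VD] ` ({VO,C0,VD} \<inter> S)) \<union> (Pair [VO,C4,C3,VD] ` ({VO,C4,C3,VD} \<inter> S))
   \<union> (Pair [VO,C4,C2,C5,VD] ` ({VO,C4,C2,C5,VD} \<inter> S)) \<union> (Pair [VO,C1,C5,VD] ` ({VO,C1,C5,VD} \<inter> S))"
  unfolding feasible_routes_def od_char by auto

abbreviation "r0 \<equiv> ([VO,C0,VD],C0)"
abbreviation "r1 \<equiv> ([VO,C4,C3,VD],C3)"
abbreviation "r2 \<equiv> ([VO,C4,C2,C5,VD],C2)"
abbreviation "r3 \<equiv> ([VO,C1,C5,VD],C1)"

lemma rl0: "route_links r0 = {(VO,C0),(C0,VD),(C0,C0)}" by (auto simp: route_links_def path_links_def)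
lemma rl1: "route_links r1 = {(VO,C4),(C4,C3),(C3,VD),(C3,C3)}" by (auto simp: route_links_def path_links_def)
lemma rl2: "route_links r2 = {(VO,C4),(C4,C2),(C2,C5),(C5,VD),(C2,C2)}" by (auto simp: route_links_def path_links_def)
lemma rl3: "route_links r3 = {(VO,C1),(C1,C5),(C5,VD),(C1,C1)}" by (auto simp: route_links_def path_links_def)
lemmas rls = rl0 rl1 rl2 rl3

lemma sl: "{(v, v) |v. v \<in> S} = (\<lambda>v. (v,v)) ` S" by auto

lemma eqD: "is_equilibrium S f \<Longrightarrow> r \<in> feasible_routes S \<Longrightarrow> r' \<in> feasible_routes S \<Longrightarrow> 0 < f r
   \<Longrightarrow> route_cost S f r \<le> route_cost S f r'"
  unfolding is_equilibrium_def by blast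

lemma eqA: "is_equilibrium S f \<Longrightarrow> 0 \<le> f r"
  unfolding is_equilibrium_def is_assignment_def by blast

lemma eqS: "is_equilibrium S f \<Longrightarrow> (\<Sum>r\<in>feasible_routes S. f r) = 1"
  unfolding is_equilibrium_def is_assignment_def by blast

lemma eqI3: "(\<forall>r. 0 \<le> f r) \<Longrightarrow> (\<forall>r. r \<notin> feasible_routes S \<longrightarrow> f r = 0) \<Longrightarrow> (\<Sum>r\<in>feasible_routes S. f r) = 1
  \<Longrightarrow> (\<forall>r\<in>feasible_routes S. 0 < f r \<longrightarrow> (\<forall>r'\<in>feasible_routes S. route_cost S f r \<le> route_cost S f r'))
  \<Longrightarrow> is_equilibrium S f"
  unfolding is_equilibrium_def is_assignment_def by blast

lemma fr_13: "feasible_routes {C0,C1,C3} = {r0, r1, r3}"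
  unfolding fr by (simp add: insert_commute)

lemma lf_13: "link_flow {C0,C1,C3} f l = (if l \<in> route_links r0 then f r0 else 0)
  + (if l \<in> route_links r1 then f r1 else 0) + (if l \<in> route_links r3 then f r3 else 0)"
  unfolding link_flow_def fr_13 by simp

lemma rc_13: "route_cost {C0,C1,C3} f r0 = 20"
  "route_cost {C0,C1,C3} f r1 = f r1 + 1.1"
  "route_cost {C0,C1,C3} f r3 = 1.1 + f r3"
  unfolding route_cost_def rls by (simp_all add: lf_13 rls)

lemma td_13: "total_delay {C0,C1,C3} f = 20 * f r0 + f r1 * f r1 + f r1 * 1.1 + f r3 * f r3 + f r3 * 1.1"
  unfolding total_delay_def network_links_def E_def sl by (simp add: lf_13 rls)

lemma case_13: "eq_total_delay {C1,C3} 1.6"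
  unfolding eq_total_delay_def
proof (intro conjI allI impI)
  let ?f = "\<lambda>r. if r = r1 \<or> r = r3 then (1/2::real) else 0"
  show "\<exists>f. is_equilibrium (insert C0 {C1, C3}) f"
  proof (intro exI eqI3)
    show "\<forall>r\<in>feasible_routes (insert C0 {C1, C3}). 0 < ?f r \<longrightarrow>
       (\<forall>r'\<in>feasible_routes (insert C0 {C1, C3}). route_cost (insert C0 {C1, C3}) ?f r \<le> route_cost (insert C0 {C1, C3}) ?f r')"
      unfolding fr_13 by (simp add: rc_13)
  qed (auto simp: fr_13)
next
  fix f assume e: "is_equilibrium (insert C0 {C1, C3}) f"
  have a0: "0 \<le> f r0" "0 \<le> f r1" "0 \<le> f r3" using eqA[OF e] by auto
  have s: "f r0 + f r1 + f r3 = 1" using eqS[OF e] by (simp add: fr_13)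
  have d: "\<And>r r'. r \<in> {r0,r1,r3} \<Longrightarrow> r' \<in> {r0,r1,r3} \<Longrightarrow> 0 < f r \<Longrightarrow> route_cost {C0,C1,C3} f r \<le> route_cost {C0,C1,C3} f r'"
    using eqD[OF e] by (simp add: fr_13)
  have "f r0 = 0"
  proof (rule ccontr)
    assume "f r0 \<noteq> 0" then have "0 < f r0" using a0 by simp
    from d[OF _ _ this, of r1] show False using a0 s by (simp add: rc_13)
  qed
  moreover have "f r1 \<le> f r3"
  proof (cases "f r1 = 0")
    case False then have "0 < f r1" using a0 by simp
    from d[OF _ _ this, of r3] show ?thesis by (simp add: rc_13)
  qed (use a0 in simp)
  moreover have "f r3 \<le> f r1"
  proof (cases "f r3 = 0")
    case False then have "0 < f r3" using a0 by simp
    from d[OF _ _ this, of r1] show ?thesis by (simp add: rc_13)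
  qed (use a0 in simp)
  ultimately have h: "f r1 = 1/2" "f r3 = 1/2" "f r0 = 0" using s by auto
  show "total_delay (insert C0 {C1, C3}) f = 1.6" by (simp add: td_13 h)
qed


lemma fr_1: "feasible_routes {C0,C1} = {r0, r3}"
  unfolding fr by (simp add: insert_commute)

lemma lf_1: "link_flow {C0,C1} f l = (if l \<in> route_links r0 then f r0 else 0) + (if l \<in> route_links r3 then f r3 else 0)"
  unfolding link_flow_def fr_1 by simp

lemma rc_1:
  "route_cost {C0,C1} f r0 = 20"
  "route_cost {C0,C1} f r3 = 1.1 + f r3"
  unfolding route_cost_def rls by (simp_all add: lf_1 rls)

lemma td_1: "total_delay {C0,C1} f = 20 * f r0 + f r3 * f r3 + f r3 * 1.1"
  unfolding total_delay_def network_links_def E_def sl by (simp add: lf_1 rls algebra_simps)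

lemma case_1: "eq_total_delay {C1} 2.1"
  unfolding eq_total_delay_def
proof (intro conjI allI impI)
  let ?f = "\<lambda>r. if r = r3 then (1::real) else 0"
  show "\<exists>f. is_equilibrium (insert C0 {C1}) f"
  proof (intro exI eqI3)
    show "\<forall>r\<in>feasible_routes (insert C0 {C1}). 0 < ?f r \<longrightarrow>
       (\<forall>r'\<in>feasible_routes (insert C0 {C1}). route_cost (insert C0 {C1}) ?f r \<le> route_cost (insert C0 {C1}) ?f r')"
      unfolding fr_1 by (simp add: rc_1)
  qed (auto simp: fr_1)
next
  fix f assume e: "is_equilibrium (insert C0 {C1}) f"
  have a0: "0 \<le> f r0" "0 \<le> f r3" using eqA[OF e] by auto
  have s: "f r0 + f r3 = 1" using eqS[OF e] by (simp add: fr_1)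
  have d: "\<And>r r'. r \<in> {r0, r3} \<Longrightarrow> r' \<in> {r0, r3} \<Longrightarrow> 0 < f r \<Longrightarrow> route_cost {C0,C1} f r \<le> route_cost {C0,C1} f r'"
    using eqD[OF e] by (simp add: fr_1)
  have z0: "f r0 = 0"
  proof (rule ccontr)
    assume "f r0 \<noteq> 0" then have "0 < f r0" using a0 by simp
    from d[OF _ _ this, of r3] show False using a0 s by (simp add: rc_1)
  qed
  have h: "f r3 = 1" using s z0 by simp
  show "total_delay (insert C0 {C1}) f = 2.1" by (simp add: td_1 h z0)
qed

lemma fr_2: "feasible_routes {C0,C2} = {r0, r2}"
  unfolding fr by (simp add: insert_commute)

lemma lf_2: "link_flow {C0,C2} f l = (if l \<in> route_links r0 then f r0 else 0) + (if l \<in> route_links r2 then f r2 else 0)"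
  unfolding link_flow_def fr_2 by simp

lemma rc_2:
  "route_cost {C0,C2} f r0 = 20"
  "route_cost {C0,C2} f r2 = f r2 + f r2"
  unfolding route_cost_def rls by (simp_all add: lf_2 rls)

lemma td_2: "total_delay {C0,C2} f = 20 * f r0 + f r2 * f r2 + f r2 * f r2"
  unfolding total_delay_def network_links_def E_def sl by (simp add: lf_2 rls algebra_simps)

lemma case_2: "eq_total_delay {C2} 2"
  unfolding eq_total_delay_def
proof (intro conjI allI impI)
  let ?f = "\<lambda>r. if r = r2 then (1::real) else 0"
  show "\<exists>f. is_equilibrium (insert C0 {C2}) f"
  proof (intro exI eqI3)
    show "\<forall>r\<in>feasible_routes (insert C0 {C2}). 0 < ?f r \<longrightarrow>
       (\<forall>r'\<in>feasible_routes (insert C0 {C2}). route_cost (insert C0 {C2}) ?f r \<le> route_cost (insert C0 {C2}) ?f r')"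
      unfolding fr_2 by (simp add: rc_2)
  qed (auto simp: fr_2)
next
  fix f assume e: "is_equilibrium (insert C0 {C2}) f"
  have a0: "0 \<le> f r0" "0 \<le> f r2" using eqA[OF e] by auto
  have s: "f r0 + f r2 = 1" using eqS[OF e] by (simp add: fr_2)
  have d: "\<And>r r'. r \<in> {r0, r2} \<Longrightarrow> r' \<in> {r0, r2} \<Longrightarrow> 0 < f r \<Longrightarrow> route_cost {C0,C2} f r \<le> route_cost {C0,C2} f r'"
    using eqD[OF e] by (simp add: fr_2)
  have z0: "f r0 = 0"
  proof (rule ccontr)
    assume "f r0 \<noteq> 0" then have "0 < f r0" using a0 by simp
    from d[OF _ _ this, of r2] show False using a0 s by (simp add: rc_2)
  qed
  have h: "f r2 = 1" using s z0 by simp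
  show "total_delay (insert C0 {C2}) f = 2" by (simp add: td_2 h z0)
qed

lemma fr_3: "feasible_routes {C0,C3} = {r0, r1}"
  unfolding fr by (simp add: insert_commute)

lemma lf_3: "link_flow {C0,C3} f l = (if l \<in> route_links r0 then f r0 else 0) + (if l \<in> route_links r1 then f r1 else 0)"
  unfolding link_flow_def fr_3 by simp

lemma rc_3:
  "route_cost {C0,C3} f r0 = 20"
  "route_cost {C0,C3} f r1 = f r1 + 1.1"
  unfolding route_cost_def rls by (simp_all add: lf_3 rls)

lemma td_3: "total_delay {C0,C3} f = 20 * f r0 + f r1 * f r1 + f r1 * 1.1"
  unfolding total_delay_def network_links_def E_def sl by (simp add: lf_3 rls algebra_simps)

lemma case_3: "eq_total_delay {C3} 2.1"
  unfolding eq_total_delay_def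
proof (intro conjI allI impI)
  let ?f = "\<lambda>r. if r = r1 then (1::real) else 0"
  show "\<exists>f. is_equilibrium (insert C0 {C3}) f"
  proof (intro exI eqI3)
    show "\<forall>r\<in>feasible_routes (insert C0 {C3}). 0 < ?f r \<longrightarrow>
       (\<forall>r'\<in>feasible_routes (insert C0 {C3}). route_cost (insert C0 {C3}) ?f r \<le> route_cost (insert C0 {C3}) ?f r')"
      unfolding fr_3 by (simp add: rc_3)
  qed (auto simp: fr_3)
next
  fix f assume e: "is_equilibrium (insert C0 {C3}) f"
  have a0: "0 \<le> f r0" "0 \<le> f r1" using eqA[OF e] by auto
  have s: "f r0 + f r1 = 1" using eqS[OF e] by (simp add: fr_3)
  have d: "\<And>r r'. r \<in> {r0, r1} \<Longrightarrow> r' \<in> {r0, r1} \<Longrightarrow> 0 < f r \<Longrightarrow> route_cost {C0,C3} f r \<le> route_cost {C0,C3} f r'"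
    using eqD[OF e] by (simp add: fr_3)
  have z0: "f r0 = 0"
  proof (rule ccontr)
    assume "f r0 \<noteq> 0" then have "0 < f r0" using a0 by simp
    from d[OF _ _ this, of r1] show False using a0 s by (simp add: rc_3)
  qed
  have h: "f r1 = 1" using s z0 by simp
  show "total_delay (insert C0 {C3}) f = 2.1" by (simp add: td_3 h z0)
qed

lemma fr_12: "feasible_routes {C0,C1,C2} = {r0, r2, r3}"
  unfolding fr by (simp add: insert_commute)

lemma lf_12: "link_flow {C0,C1,C2} f l = (if l \<in> route_links r0 then f r0 else 0) + (if l \<in> route_links r2 then f r2 else 0) + (if l \<in> route_links r3 then f r3 else 0)"
  unfolding link_flow_def fr_12 by simp

lemma rc_12:
  "route_cost {C0,C1,C2} f r0 = 20"
  "route_cost {C0,C1,C2} f r2 = f r2 + (f r2 + f r3)"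
  "route_cost {C0,C1,C2} f r3 = 1.1 + (f r2 + f r3)"
  unfolding route_cost_def rls by (simp_all add: lf_12 rls)

lemma td_12: "total_delay {C0,C1,C2} f = 20 * f r0 + f r2 * f r2 + (f r2 + f r3) * (f r2 + f r3) + f r3 * 1.1"
  unfolding total_delay_def network_links_def E_def sl by (simp add: lf_12 rls algebra_simps)

lemma case_12: "eq_total_delay {C1, C2} 2"
  unfolding eq_total_delay_def
proof (intro conjI allI impI)
  let ?f = "\<lambda>r. if r = r2 then (1::real) else 0"
  show "\<exists>f. is_equilibrium (insert C0 {C1, C2}) f"
  proof (intro exI eqI3)
    show "\<forall>r\<in>feasible_routes (insert C0 {C1, C2}). 0 < ?f r \<longrightarrow>
       (\<forall>r'\<in>feasible_routes (insert C0 {C1, C2}). route_cost (insert C0 {C1, C2}) ?f r \<le> route_cost (insert C0 {C1, C2}) ?f r')"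
      unfolding fr_12 by (simp add: rc_12)
  qed (auto simp: fr_12)
next
  fix f assume e: "is_equilibrium (insert C0 {C1, C2}) f"
  have a0: "0 \<le> f r0" "0 \<le> f r2" "0 \<le> f r3" using eqA[OF e] by auto
  have s: "f r0 + f r2 + f r3 = 1" using eqS[OF e] by (simp add: fr_12)
  have d: "\<And>r r'. r \<in> {r0, r2, r3} \<Longrightarrow> r' \<in> {r0, r2, r3} \<Longrightarrow> 0 < f r \<Longrightarrow> route_cost {C0,C1,C2} f r \<le> route_cost {C0,C1,C2} f r'"
    using eqD[OF e] by (simp add: fr_12)
  have z0: "f r0 = 0"
  proof (rule ccontr)
    assume "f r0 \<noteq> 0" then have "0 < f r0" using a0 by simp
    from d[OF _ _ this, of r2] show False using a0 s by (simp add: rc_12)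
  qed
  have z1: "f r3 = 0"
  proof (rule ccontr)
    assume "f r3 \<noteq> 0" then have "0 < f r3" using a0 by simp
    from d[OF _ _ this, of r2] show False using a0 s z0 by (simp add: rc_12)
  qed
  have h: "f r2 = 1" using s z0 z1 by simp
  show "total_delay (insert C0 {C1, C2}) f = 2" by (simp add: td_12 h z0 z1)
qed

lemma fr_23: "feasible_routes {C0,C2,C3} = {r0, r1, r2}"
  unfolding fr by (simp add: insert_commute)

lemma lf_23: "link_flow {C0,C2,C3} f l = (if l \<in> route_links r0 then f r0 else 0) + (if l \<in> route_links r1 then f r1 else 0) + (if l \<in> route_links r2 then f r2 else 0)"
  unfolding link_flow_def fr_23 by simp

lemma rc_23:
  "route_cost {C0,C2,C3} f r0 = 20"
  "route_cost {C0,C2,C3} f r1 = (f r1 + f r2) + 1.1"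
  "route_cost {C0,C2,C3} f r2 = (f r1 + f r2) + f r2"
  unfolding route_cost_def rls by (simp_all add: lf_23 rls)

lemma td_23: "total_delay {C0,C2,C3} f = 20 * f r0 + (f r1 + f r2) * (f r1 + f r2) + f r1 * 1.1 + f r2 * f r2"
  unfolding total_delay_def network_links_def E_def sl by (simp add: lf_23 rls algebra_simps)

lemma case_23: "eq_total_delay {C2, C3} 2"
  unfolding eq_total_delay_def
proof (intro conjI allI impI)
  let ?f = "\<lambda>r. if r = r2 then (1::real) else 0"
  show "\<exists>f. is_equilibrium (insert C0 {C2, C3}) f"
  proof (intro exI eqI3)
    show "\<forall>r\<in>feasible_routes (insert C0 {C2, C3}). 0 < ?f r \<longrightarrow>
       (\<forall>r'\<in>feasible_routes (insert C0 {C2, C3}). route_cost (insert C0 {C2, C3}) ?f r \<le> route_cost (insert C0 {C2, C3}) ?f r')"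
      unfolding fr_23 by (simp add: rc_23)
  qed (auto simp: fr_23)
next
  fix f assume e: "is_equilibrium (insert C0 {C2, C3}) f"
  have a0: "0 \<le> f r0" "0 \<le> f r1" "0 \<le> f r2" using eqA[OF e] by auto
  have s: "f r0 + f r1 + f r2 = 1" using eqS[OF e] by (simp add: fr_23)
  have d: "\<And>r r'. r \<in> {r0, r1, r2} \<Longrightarrow> r' \<in> {r0, r1, r2} \<Longrightarrow> 0 < f r \<Longrightarrow> route_cost {C0,C2,C3} f r \<le> route_cost {C0,C2,C3} f r'"
    using eqD[OF e] by (simp add: fr_23)
  have z0: "f r0 = 0"
  proof (rule ccontr)
    assume "f r0 \<noteq> 0" then have "0 < f r0" using a0 by simp
    from d[OF _ _ this, of r2] show False using a0 s by (simp add: rc_23)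
  qed
  have z1: "f r1 = 0"
  proof (rule ccontr)
    assume "f r1 \<noteq> 0" then have "0 < f r1" using a0 by simp
    from d[OF _ _ this, of r2] show False using a0 s z0 by (simp add: rc_23)
  qed
  have h: "f r2 = 1" using s z0 z1 by simp
  show "total_delay (insert C0 {C2, C3}) f = 2" by (simp add: td_23 h z0 z1)
qed

theorem mainTheorem3:
  shows "eq_total_delay {C1} 2.1 \<and> eq_total_delay {C2} 2 \<and> eq_total_delay {C3} 2.1
       \<and> eq_total_delay {C1, C2} 2 \<and> eq_total_delay {C2, C3} 2
       \<and> eq_total_delay {C1, C3} 1.6"
  using case_1 case_2 case_3 case_12 case_23 case_13 by blast

end
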